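(* Consider the ODE system $$\frac{du}{dt}=a_1u-b_1u^2-c_1uv,\qquad \frac{dv}{dt}=\frac{a_2v}{1+ku}-b_2v^2-c_2uv,$$ with positive parameters $a_1,a_2,b_1,b_2,c_1,c_2$. For every value of $k\ge0$, the system has no periodic orbits in the nonnegative quadrant $\{u\ge0,v\ge0\}$.
   Context: The state space is the biologically feasible nonnegative quadrant of population densities. *)

theory Defs
  imports Complex_Main
begin

definition is_solution ::
  "real \<Rightarrow> real \<Rightarrow> real \<Rightarrow> real \<Rightarrow> real \<Rightarrow> real \<Rightarrow> real \<Rightarrow>
   (real \<Rightarrow> real) \<Rightarrow> (real \<Rightarrow> real) \<Rightarrow> bool" where
  "is_solution a1 b1 c1 a2 b2 c2 k u v \<longleftrightarrow>
     (\<forall>t. (u has_real_derivative (a1 * u t - b1 * (u t)^2 - c1 * u t * v t)) (at t) \<and>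
          (v has_real_derivative (a2 * v t / (1 + k * u t) - b2 * (v t)^2 - c2 * u t * v t)) (at t))"

definition periodic_orbit ::
  "real \<Rightarrow> real \<Rightarrow> real \<Rightarrow> real \<Rightarrow> real \<Rightarrow> real \<Rightarrow> real \<Rightarrow>
   (real \<Rightarrow> real) \<Rightarrow> (real \<Rightarrow> real) \<Rightarrow> bool" where
  "periodic_orbit a1 b1 c1 a2 b2 c2 k u v \<longleftrightarrow>
     is_solution a1 b1 c1 a2 b2 c2 k u v \<and>
     (\<exists>T>0. \<forall>t. u (t + T) = u t \<and> v (t + T) = v t) \<and>
     \<not> (\<exists>p q. \<forall>t. u t = p \<and> v t = q)"

end

theory Submission
  imports Defs "HOL-Analysis.Analysis"
begin

lemma periodic_shift_nat:
  fixes h :: "real \<Rightarrow> 'b"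
  assumes "\<forall>t. h (t + T) = h t"
  shows "h (t + real n * T) = h t"
proof (induction n)
  case 0 then show ?case by simp
next
  case (Suc n)
  have "h (t + real (Suc n) * T) = h ((t + real n * T) + T)" by (simp add: algebra_simps)
  also have "\<dots> = h t" using assms Suc by simp
  finally show ?case .
qed

lemma periodic_shift_int:
  fixes h :: "real \<Rightarrow> 'b"
  assumes "\<forall>t. h (t + T) = h t"
  shows "h (t + real_of_int n * T) = h t"
proof (cases "n \<ge> 0")
  case True
  then obtain m where "n = int m" using nonneg_int_cases by blast
  then show ?thesis using periodic_shift_nat[OF assms] by simp
next
  case False
  define m where "m = nat (-n)"
  have m: "n = - int m" using False by (simp add: m_def)
  have "h ((t - real m * T) + real m * T) = h (t - real m * T)"
    using periodic_shift_nat[OF assms] by blast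
  then show ?thesis using m by simp
qed

lemma periodic_const:
  fixes h :: "real \<Rightarrow> 'b"
  assumes "T > 0" "\<forall>t. h (t + T) = h t" "\<forall>s\<in>{t0..t0+T}. h s = h t0"
  shows "h t = h t0"
proof -
  define n where "n = floor ((t - t0) / T)"
  define s where "s = t - real_of_int n * T"
  have n1: "real_of_int n \<le> (t - t0) / T" unfolding n_def by (rule of_int_floor_le)
  have n2: "(t - t0) / T < real_of_int n + 1" unfolding n_def by (rule real_of_int_floor_add_one_gt)
  have m1: "real_of_int n * T \<le> t - t0" using n1 assms(1) by (simp add: le_divide_eq)
  have m2: "t - t0 < (real_of_int n + 1) * T" using n2 assms(1) by (simp add: divide_less_eq)
  have "t0 \<le> s" unfolding s_def using m1 by linarith
  moreover have "s \<le> t0 + T" unfolding s_def using m2 by (simp add: distrib_right)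
  ultimately have "s \<in> {t0..t0+T}" by simp
  moreover have "h t = h s"
    using periodic_shift_int[OF assms(2), of s n] unfolding s_def by (simp add: algebra_simps)
  ultimately show ?thesis using assms(3) by metis
qed

lemma periodic_mono_const:
  fixes h d :: "real \<Rightarrow> real"
  assumes "T > 0" "\<forall>t. h (t + T) = h t" "\<forall>t. (h has_real_derivative d t) (at t)"
    and "(\<forall>t. d t \<ge> 0) \<or> (\<forall>t. d t \<le> 0)"
  shows "h t = h 0"
proof -
  have hT: "h T = h 0" using assms(2) by (metis add_0)
  have "\<forall>s\<in>{0..0+T}. h s = h 0"
  proof
    fix s assume s: "s \<in> {0..0+T}"
    then have s0: "0 \<le> s" and sT: "s \<le> T" by auto
    show "h s = h 0"
      using assms(4)
    proof
      assume d: "\<forall>t. d t \<ge> 0"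
      have ex: "\<exists>y. DERIV h x :> y \<and> y \<ge> 0" for x using d assms(3) by blast
      have "h 0 \<le> h s" by (rule DERIV_nonneg_imp_nondecreasing[of 0 s h, OF s0 ex])
      moreover have "h s \<le> h T" by (rule DERIV_nonneg_imp_nondecreasing[of s T h, OF sT ex])
      ultimately show ?thesis using hT by simp
    next
      assume d: "\<forall>t. d t \<le> 0"
      have ex: "\<exists>y. DERIV h x :> y \<and> y \<le> 0" for x using d assms(3) by blast
      have "h 0 \<ge> h s" by (rule DERIV_nonpos_imp_nonincreasing[of 0 s h, OF s0 ex])
      moreover have "h s \<ge> h T" by (rule DERIV_nonpos_imp_nonincreasing[of s T h, OF sT ex])
      ultimately show ?thesis using hT by simp
    qed
  qed
  then show ?thesis using periodic_const[OF assms(1,2)] by blast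
qed

lemma nonzero_sign:
  fixes f :: "real \<Rightarrow> real"
  assumes "continuous_on UNIV f" "\<forall>t. f t \<noteq> 0"
  shows "(\<forall>t. f t \<ge> 0) \<or> (\<forall>t. f t \<le> 0)"
proof (rule ccontr)
  assume H: "\<not> ?thesis"
  have "\<exists>t1. f t1 < 0" using H by (auto simp: not_le)
  then obtain t1 where t1: "f t1 < 0" by blast
  have "\<exists>t2. f t2 > 0" using H by (auto simp: not_le)
  then obtain t2 where t2: "f t2 > 0" by blast
  have c: "continuous_on {a..b} f" for a b using assms(1) by (rule continuous_on_subset) simp
  have "\<exists>x. f x = 0"
  proof (cases "t1 \<le> t2")
    case True
    have "\<exists>x. t1 \<le> x \<and> x \<le> t2 \<and> f x = 0"
      by (rule IVT'[of f t1 0 t2, OF _ _ True c]) (use t1 t2 in simp_all)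
    then show ?thesis by blast
  next
    case False
    then have le: "t2 \<le> t1" by simp
    have "\<exists>x. t2 \<le> x \<and> x \<le> t1 \<and> f x = 0"
      by (rule IVT2'[of f t1 0 t2, OF _ _ le c]) (use t1 t2 in simp_all)
    then show ?thesis by blast
  qed
  then show False using assms(2) by blast
qed

theorem mainTheorem6:
  fixes a1 b1 c1 a2 b2 c2 k :: real
  assumes "a1 > 0" "b1 > 0" "c1 > 0" "a2 > 0" "b2 > 0" "c2 > 0" "k \<ge> 0"
  shows "\<not> (\<exists>u v. periodic_orbit a1 b1 c1 a2 b2 c2 k u v \<and> (\<forall>t. u t \<ge> 0 \<and> v t \<ge> 0))"
proof
  assume "\<exists>u v. periodic_orbit a1 b1 c1 a2 b2 c2 k u v \<and> (\<forall>t. u t \<ge> 0 \<and> v t \<ge> 0)"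
  then obtain u v where po: "periodic_orbit a1 b1 c1 a2 b2 c2 k u v"
    and nn: "\<And>t. u t \<ge> 0" "\<And>t. v t \<ge> 0" by blast
  from po obtain T where T: "T > 0" "\<forall>t. u (t + T) = u t" "\<forall>t. v (t + T) = v t"
    unfolding periodic_orbit_def by blast
  from po have nonconst: "\<not> (\<exists>p q. \<forall>t. u t = p \<and> v t = q)"
    unfolding periodic_orbit_def by blast
  from po have sol: "is_solution a1 b1 c1 a2 b2 c2 k u v"
    unfolding periodic_orbit_def by blast
  define f where "f t = a1 - b1 * u t - c1 * v t" for t
  define g where "g t = a2 / (1 + k * u t) - b2 * v t - c2 * u t" for t
  define \<beta> where "\<beta> t = a2 * k / (1 + k * u t)^2 + c2" for t
  have pos: "1 + k * u t > 0" for t using nn(1)[of t] assms(7) by (simp add: add_pos_nonneg)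
  have \<beta>pos: "\<beta> t > 0" for t
    unfolding \<beta>_def using assms(4,6,7) by (simp add: add_nonneg_pos)
  have du: "(u has_real_derivative (u t * f t)) (at t)" for t
  proof -
    have "a1 * u t - b1 * (u t)^2 - c1 * u t * v t = u t * f t"
      unfolding f_def by (simp add: power2_eq_square algebra_simps)
    then show ?thesis using sol unfolding is_solution_def by metis
  qed
  have dv: "(v has_real_derivative (v t * g t)) (at t)" for t
  proof -
    have "a2 * v t / (1 + k * u t) - b2 * (v t)^2 - c2 * u t * v t = v t * g t"
      unfolding g_def by (simp add: power2_eq_square algebra_simps)
    then show ?thesis using sol unfolding is_solution_def by metis
  qed
  have cu: "isCont u t" for t using du DERIV_isCont by blast
  have cv: "isCont v t" for t using dv DERIV_isCont by blast
  have fper: "f (t + T) = f t" for t unfolding f_def using T by simp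
  have gper: "g (t + T) = g t" for t unfolding g_def using T by simp
  have df: "(f has_real_derivative (- b1 * (u t * f t) - c1 * (v t * g t))) (at t)" for t
    unfolding f_def[abs_def]
    by (rule derivative_eq_intros du dv refl)+ (simp add: f_def algebra_simps)
  have dg: "(g has_real_derivative (- (\<beta> t * (u t * f t)) - b2 * (v t * g t))) (at t)" for t
  proof -
    have gdef: "g = (\<lambda>t. a2 / (1 + k * u t) - b2 * v t - c2 * u t)" by (simp add: g_def fun_eq_iff)
    have d1: "((\<lambda>t. 1 + k * u t) has_real_derivative 0 + k * (u t * f t)) (at t)"
      by (intro DERIV_add DERIV_const DERIV_cmult du)
    have d2: "((\<lambda>t. a2 / (1 + k * u t)) has_real_derivative
        (0 * (1 + k * u t) - a2 * (0 + k * (u t * f t))) / ((1 + k * u t) * (1 + k * u t))) (at t)"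
      by (rule DERIV_divide[OF DERIV_const d1]) (use pos[of t] in simp)
    have d3: "((\<lambda>t. a2 / (1 + k * u t) - b2 * v t - c2 * u t) has_real_derivative
        (0 * (1 + k * u t) - a2 * (0 + k * (u t * f t))) / ((1 + k * u t) * (1 + k * u t))
          - b2 * (v t * g t) - c2 * (u t * f t)) (at t)"
      by (intro DERIV_diff d2 DERIV_cmult du dv)
    have eq: "(0 * (1 + k * u t) - a2 * (0 + k * (u t * f t))) / ((1 + k * u t) * (1 + k * u t))
          - b2 * (v t * g t) - c2 * (u t * f t) = - (\<beta> t * (u t * f t)) - b2 * (v t * g t)"
      unfolding \<beta>_def using pos[of t] by (simp add: field_simps power2_eq_square)
    show ?thesis using d3 unfolding eq gdef[symmetric] .
  qed
  show False
  proof (cases "\<exists>t0. f t0 * g t0 \<ge> 0")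
    case True
    then obtain t0 where t0: "f t0 * g t0 \<ge> 0" by blast
    define S where "S x = integral {t0 - 1..x} (\<lambda>s. b1 * u s + b2 * v s)" for x
    have cont: "continuous_on {t0 - 1..t0 + T + 1} (\<lambda>s. b1 * u s + b2 * v s)"
      by (intro continuous_at_imp_continuous_on ballI continuous_intros cu cv)
    have dS: "(S has_real_derivative (b1 * u x + b2 * v x)) (at x)"
      if "t0 - 1 < x" "x < t0 + T + 1" for x
    proof -
      have "(S has_real_derivative (b1 * u x + b2 * v x)) (at x within {t0 - 1..t0 + T + 1})"
        unfolding S_def[abs_def] using that by (intro integral_has_real_derivative cont) auto
      then show ?thesis using at_within_Icc_at[OF that] by simp
    qed
    define Phi where "Phi x = f x * g x * exp (S x)" for x
    have dPhi: "(Phi has_real_derivative (- (exp (S x) * (c1 * v x * (g x)^2 + \<beta> x * u x * (f x)^2)))) (at x)"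
      if "t0 - 1 < x" "x < t0 + T + 1" for x
    proof -
      have "(Phi has_real_derivative ((- b1 * (u x * f x) - c1 * (v x * g x)) * g x + f x * (- (\<beta> x * (u x * f x)) - b2 * (v x * g x))) * exp (S x)
               + f x * g x * (exp (S x) * (b1 * u x + b2 * v x))) (at x)"
        unfolding Phi_def[abs_def]
        using DERIV_mult[OF DERIV_mult[OF df dg] DERIV_chain2[OF DERIV_exp dS[OF that]]] by (simp add: ac_simps)
      moreover have "((- b1 * (u x * f x) - c1 * (v x * g x)) * g x + f x * (- (\<beta> x * (u x * f x)) - b2 * (v x * g x))) * exp (S x)
               + f x * g x * (exp (S x) * (b1 * u x + b2 * v x))
             = - (exp (S x) * (c1 * v x * (g x)^2 + \<beta> x * u x * (f x)^2))"
        by (simp add: power2_eq_square algebra_simps)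
      ultimately show ?thesis by simp
    qed
    have dnn: "c1 * v x * (g x)^2 + \<beta> x * u x * (f x)^2 \<ge> 0" for x
      using nn[of x] \<beta>pos[of x] assms(3) by (intro add_nonneg_nonneg mult_nonneg_nonneg) auto
    have Smono: "S t0 \<le> S (t0 + T)"
    proof (rule DERIV_nonneg_imp_nondecreasing[of t0 "t0 + T" S])
      show "t0 \<le> t0 + T" using T(1) by simp
      fix x assume x: "t0 \<le> x" "x \<le> t0 + T"
      have "b1 * u x + b2 * v x \<ge> 0" using nn[of x] assms(2,5) by simp
      then show "\<exists>y. DERIV S x :> y \<and> y \<ge> 0" using dS[of x] x by auto
    qed
    have "Phi (t0 + T) = f t0 * g t0 * exp (S (t0 + T))" unfolding Phi_def using fper gper by simp
    also have "\<dots> \<ge> f t0 * g t0 * exp (S t0)" using t0 Smono by (intro mult_left_mono) auto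
    finally have PhiT: "Phi t0 \<le> Phi (t0 + T)" unfolding Phi_def by simp
    have Phic: "Phi s = Phi t0" if "s \<in> {t0..t0 + T}" for s
    proof -
      have dd: "\<exists>y. DERIV Phi x :> y \<and> y \<le> 0" if "t0 \<le> x" "x \<le> t0 + T" for x
      proof -
        have "- (exp (S x) * (c1 * v x * (g x)^2 + \<beta> x * u x * (f x)^2)) \<le> 0"
          using dnn[of x] by simp
        then show ?thesis using dPhi[of x] that by auto
      qed
      have "Phi s \<le> Phi t0" using that
        by (intro DERIV_nonpos_imp_nonincreasing[of t0 s Phi] dd) auto
      moreover have "Phi (t0 + T) \<le> Phi s" using that
        by (intro DERIV_nonpos_imp_nonincreasing[of s "t0 + T" Phi] dd) auto
      ultimately show ?thesis using PhiT by simp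
    qed
    have zero: "u s * f s = 0 \<and> v s * g s = 0" if "t0 < s" "s < t0 + T" for s
    proof -
      have "- (exp (S s) * (c1 * v s * (g s)^2 + \<beta> s * u s * (f s)^2)) = 0"
      proof (rule DERIV_local_const[OF dPhi[of s]])
        show "t0 - 1 < s" "s < t0 + T + 1" using that by auto
        show "0 < min (s - t0) (t0 + T - s)" using that by simp
        show "\<forall>y. \<bar>s - y\<bar> < min (s - t0) (t0 + T - s) \<longrightarrow> Phi s = Phi y"
        proof (intro allI impI)
          fix y assume "\<bar>s - y\<bar> < min (s - t0) (t0 + T - s)"
          then have "y \<in> {t0..t0 + T}" by (auto simp: abs_less_iff)
          moreover have "s \<in> {t0..t0 + T}" using that by auto
          ultimately show "Phi s = Phi y" using Phic by metis
        qed
      qed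
      then have e: "c1 * v s * (g s)^2 + \<beta> s * u s * (f s)^2 = 0" by simp
      have a: "c1 * v s * (g s)^2 \<ge> 0" using nn[of s] assms(3) by simp
      have b: "\<beta> s * u s * (f s)^2 \<ge> 0" using nn[of s] \<beta>pos[of s] by simp
      have "c1 * v s * (g s)^2 = 0" "\<beta> s * u s * (f s)^2 = 0" using a b e by linarith+
      then show ?thesis using assms(3) \<beta>pos[of s] by (auto simp: power2_eq_square)
    qed
    have ucst: "u s = u t0" if "s \<in> {t0..t0 + T}" for s
    proof (rule DERIV_isconst2[of t0 "t0 + T" u])
      show "continuous_on {t0..t0 + T} u" by (intro continuous_at_imp_continuous_on ballI cu)
      fix x assume "t0 < x" "x < t0 + T"
      then show "DERIV u x :> 0" using du[of x] zero[of x] by simp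
    qed (use that T in auto)
    have vcst: "v s = v t0" if "s \<in> {t0..t0 + T}" for s
    proof (rule DERIV_isconst2[of t0 "t0 + T" v])
      show "continuous_on {t0..t0 + T} v" by (intro continuous_at_imp_continuous_on ballI cv)
      fix x assume "t0 < x" "x < t0 + T"
      then show "DERIV v x :> 0" using dv[of x] zero[of x] by simp
    qed (use that T in auto)
    have "\<forall>t. u t = u t0 \<and> v t = v t0"
      using periodic_const[OF T(1) T(2)] periodic_const[OF T(1) T(3)] ucst vcst by blast
    then show False using nonconst by blast
  next
    case False
    have fgneg: "f t * g t < 0" for t using False by (auto simp: not_le)
    have fg: "f t \<noteq> 0" "g t \<noteq> 0" for t using fgneg[of t] by auto
    have nz: "1 + k * u t \<noteq> 0" for t using pos[of t] by simp
    have cf: "continuous_on UNIV f" unfolding f_def[abs_def]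
      by (intro continuous_at_imp_continuous_on ballI continuous_intros cu cv)
    have cg: "continuous_on UNIV g" unfolding g_def[abs_def]
      by (intro continuous_at_imp_continuous_on ballI continuous_intros cu cv nz)
    have "(\<forall>t. f t \<ge> 0) \<or> (\<forall>t. f t \<le> 0)" using nonzero_sign[OF cf] fg by blast
    then have "(\<forall>t. u t * f t \<ge> 0) \<or> (\<forall>t. u t * f t \<le> 0)"
    proof (elim disjE)
      assume h: "\<forall>t. f t \<ge> 0"
      have "u t * f t \<ge> 0" for t using h nn[of t] by simp
      then show ?thesis by blast
    next
      assume h: "\<forall>t. f t \<le> 0"
      have "u t * f t \<le> 0" for t using h nn[of t] by (simp add: mult_nonneg_nonpos)
      then show ?thesis by blast
    qed
    then have uc: "u t = u 0" for t using periodic_mono_const[OF T(1) T(2), of "\<lambda>t. u t * f t"] du by blast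
    have "(\<forall>t. g t \<ge> 0) \<or> (\<forall>t. g t \<le> 0)" using nonzero_sign[OF cg] fg by blast
    then have "(\<forall>t. v t * g t \<ge> 0) \<or> (\<forall>t. v t * g t \<le> 0)"
    proof (elim disjE)
      assume h: "\<forall>t. g t \<ge> 0"
      have "v t * g t \<ge> 0" for t using h nn[of t] by simp
      then show ?thesis by blast
    next
      assume h: "\<forall>t. g t \<le> 0"
      have "v t * g t \<le> 0" for t using h nn[of t] by (simp add: mult_nonneg_nonpos)
      then show ?thesis by blast
    qed
    then have vc: "v t = v 0" for t using periodic_mono_const[OF T(1) T(3), of "\<lambda>t. v t * g t"] dv by blast
    show False using nonconst uc vc by blast
  qed
qed

end
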